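(* Let $n\ge1$, $\varepsilon\in D$ and $s\in D^n$, and let $\mu^{(0)},\dots,\mu^{(n)}$, $\Delta_j$, $e_j$, $j'$ be given by the recursive construction below. Then $\mu^{(n)}\in\mathrm{Min}(s)$ (so $\deg\mu^{(j)}=L_j$ for all $0\le j\le n$). Moreover: if $\Delta_n=0$ then $L_n=L_{n-1}$ and $e_n=e_{n-1}+1$; if $\Delta_n\neq0$ then (i) $L_n=\deg\mu^{(n)}=\max\{e_{n-1},0\}+L_{n-1}=n'+1-L_{n'}$, and (ii) $e_n=-|e_{n-1}|+1$.
   Context: Let $D$ be a commutative integral domain with $1\neq 0$. For $s=(s_1,\dots,s_n)\in D^n$ put $\underline{s}=s_1x^{-1}+\cdots+s_nx^{-n}\in D[x,x^{-1}]$; for a Laurent polynomial $F$, $F_k$ is the coefficient of $x^k$; $s^{(i)}=(s_1,\dots,s_i)$. A polynomial $f\in D[x]$ is an annihilator of $s$, $f\in\mathrm{Ann}(s)$, if $f=0$, or $d=\deg f\ge0$ and $(f\cdot\underline{s})_{d-j}=0$ for $d+1\le j\le n$. $\mathrm{Min}(s)$ is the set of nonzero annihilators of least degree; $L(s)$ is that degree, $L_j=L(s^{(j)})$, $L_0=0$. For nonzero $f\in D[x]$ and $t\in D^m$, $\Delta(f,t)=(f\cdot\underline{t})_{\deg f-m}$. Recursive construction (relative to a fixed $\varepsilon\in D$): put $\mu^{(-1)}=\varepsilon$, $\mu^{(0)}=1$, $\Delta_0=1$, $0'=-1$, and for $j\ge 0$ let $e_j=j+1-2\deg\mu^{(j)}$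 (so $e_0=1$). For $j=1,\dots,n$ successively define: $\Delta_j=\Delta(\mu^{(j-1)},s^{(j)})$; the index $j'=(j-1)'$ if $\Delta_j=0$ or $e_{j-1}\le 0$, and $j'=j-1$ if $\Delta_j\neq0$ and $e_{j-1}>0$; $\Delta'_j=\Delta_{(j-1)'+1}$; and $\mu^{(j)}=\mu^{(j-1)}$ if $\Delta_j=0$, otherwise $\mu^{(j)}=\Delta'_j\,x^{\max\{e_{j-1},0\}}\mu^{(j-1)}-\Delta_j\,x^{\max\{-e_{j-1},0\}}\mu^{((j-1)')}$. *)

theory Defs
  imports "HOL-Computational_Algebra.Polynomial"
begin

text \<open>A sequence s in D^n is a function s :: nat => 'a of which only s 1, ..., s n matter;
  the prefix s^(i) is the same function considered with length i.\<close>

text \<open>Coefficient of x^k in the Laurent polynomial f * (s_1 x^-1 + ... + s_n x^-n).\<close>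
definition lcoeff :: "'a::comm_ring_1 poly \<Rightarrow> (nat \<Rightarrow> 'a) \<Rightarrow> nat \<Rightarrow> int \<Rightarrow> 'a" where
  "lcoeff f s n k =
     (\<Sum>i\<in>{1..n}. (if 0 \<le> k + int i then coeff f (nat (k + int i)) else 0) * s i)"

definition is_ann :: "'a::comm_ring_1 poly \<Rightarrow> (nat \<Rightarrow> 'a) \<Rightarrow> nat \<Rightarrow> bool" where
  "is_ann f s n \<longleftrightarrow> f = 0 \<or>
     (\<forall>j. degree f + 1 \<le> j \<and> j \<le> n \<longrightarrow> lcoeff f s n (int (degree f) - int j) = 0)"

definition Min_set :: "(nat \<Rightarrow> 'a::comm_ring_1) \<Rightarrow> nat \<Rightarrow> 'a poly set" where
  "Min_set s n = {f. f \<noteq> 0 \<and> is_ann f s n \<and>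
      (\<forall>g. g \<noteq> 0 \<and> is_ann g s n \<longrightarrow> degree f \<le> degree g)}"

definition L :: "(nat \<Rightarrow> 'a::comm_ring_1) \<Rightarrow> nat \<Rightarrow> nat" where
  "L s n = (LEAST d. \<exists>f. f \<noteq> 0 \<and> is_ann f s n \<and> degree f = d)"

text \<open>Delta(f, t) for t = s^(m).\<close>
definition Delta :: "'a::comm_ring_1 poly \<Rightarrow> (nat \<Rightarrow> 'a) \<Rightarrow> nat \<Rightarrow> 'a" where
  "Delta f s m = lcoeff f s m (int (degree f) - int m)"

text \<open>State after step j: the lists [mu^(0),...,mu^(j)], [0',...,j'], [Delta_0,...,Delta_j].\<close>
primrec bm :: "'a::comm_ring_1 \<Rightarrow> (nat \<Rightarrow> 'a) \<Rightarrow> nat \<Rightarrow> 'a poly list \<times> int list \<times> 'a list" where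
  "bm \<epsilon> s 0 = ([1], [-1], [1])"
| "bm \<epsilon> s (Suc j) =
     (let (mus, jps, Ds) = bm \<epsilon> s j;
          m = mus ! j;
          Dn = Delta m s (Suc j);
          e = int j + 1 - 2 * int (degree m);
          jp = jps ! j;
          jpn = (if Dn = 0 \<or> e \<le> 0 then jp else int j);
          Dp = Ds ! nat (jp + 1);
          mp = (if jp = -1 then [:\<epsilon>:] else mus ! nat jp);
          mnew = (if Dn = 0 then m
                  else smult Dp (monom 1 (nat (max e 0)) * m)
                       - smult Dn (monom 1 (nat (max (- e) 0)) * mp))
      in (mus @ [mnew], jps @ [jpn], Ds @ [Dn]))"

definition mu :: "'a::comm_ring_1 \<Rightarrow> (nat \<Rightarrow> 'a) \<Rightarrow> nat \<Rightarrow> 'a poly" where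
  "mu \<epsilon> s j = fst (bm \<epsilon> s j) ! j"

definition jprime :: "'a::comm_ring_1 \<Rightarrow> (nat \<Rightarrow> 'a) \<Rightarrow> nat \<Rightarrow> int" where
  "jprime \<epsilon> s j = fst (snd (bm \<epsilon> s j)) ! j"

definition Dlt :: "'a::comm_ring_1 \<Rightarrow> (nat \<Rightarrow> 'a) \<Rightarrow> nat \<Rightarrow> 'a" where
  "Dlt \<epsilon> s j = snd (snd (bm \<epsilon> s j)) ! j"

definition ee :: "'a::comm_ring_1 \<Rightarrow> (nat \<Rightarrow> 'a) \<Rightarrow> nat \<Rightarrow> int" where
  "ee \<epsilon> s j = int j + 1 - 2 * int (degree (mu \<epsilon> s j))"

end

theory Submission
  imports Defs
begin

lemma bm_len: "length (fst (bm \<epsilon> s j)) = Suc j \<and> length (fst (snd (bm \<epsilon> s j))) = Suc j \<and> length (snd (snd (bm \<epsilon> s j))) = Suc j"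
  by (induction j) (auto simp: Let_def split: prod.splits)

lemma bm_Suc_eq: "bm \<epsilon> s (Suc j) = (fst (bm \<epsilon> s j) @ [mu \<epsilon> s (Suc j)], fst (snd (bm \<epsilon> s j)) @ [jprime \<epsilon> s (Suc j)], snd (snd (bm \<epsilon> s j)) @ [Dlt \<epsilon> s (Suc j)])"
  using bm_len[of \<epsilon> s j]
  by (auto simp: Let_def mu_def jprime_def Dlt_def nth_append split: prod.splits)

lemma bm_prefix: "i \<le> j \<Longrightarrow> fst (bm \<epsilon> s j) ! i = mu \<epsilon> s i \<and> fst (snd (bm \<epsilon> s j)) ! i = jprime \<epsilon> s i \<and> snd (snd (bm \<epsilon> s j)) ! i = Dlt \<epsilon> s i"
proof (induction j)
  case 0 then show ?case by (simp add: mu_def jprime_def Dlt_def)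
next
  case (Suc j)
  show ?case
  proof (cases "i = Suc j")
    case True then show ?thesis by (simp add: mu_def jprime_def Dlt_def)
  next
    case False
    then have "i \<le> j" using Suc by simp
    then show ?thesis using Suc bm_len[of \<epsilon> s j] unfolding bm_Suc_eq by (simp add: nth_append del: bm.simps)
  qed
qed

lemma mu0: "mu \<epsilon> s 0 = 1" and jp0: "jprime \<epsilon> s 0 = -1" and Dlt0: "Dlt \<epsilon> s 0 = 1"
  by (simp_all add: mu_def jprime_def Dlt_def)

lemma jp_bounds: "-1 \<le> jprime \<epsilon> s j \<and> jprime \<epsilon> s j < int j"
proof (induction j)
  case 0 then show ?case by (simp add: jp0)
next
  case (Suc j)
  have "jprime \<epsilon> s (Suc j) = jprime \<epsilon> s j \<or> jprime \<epsilon> s (Suc j) = int j"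
    using bm_len[of \<epsilon> s j] bm_prefix[of j j \<epsilon> s]
    by (auto simp: jprime_def Let_def nth_append split: prod.splits)
  then show ?case using Suc by auto
qed

lemma Dlt_Suc: "Dlt \<epsilon> s (Suc j) = Delta (mu \<epsilon> s j) s (Suc j)"
  using bm_len[of \<epsilon> s j] bm_prefix[of j j \<epsilon> s]
  by (auto simp: Dlt_def Let_def nth_append split: prod.splits)

lemma jp_Suc: "jprime \<epsilon> s (Suc j) = (if Dlt \<epsilon> s (Suc j) = 0 \<or> ee \<epsilon> s j \<le> 0 then jprime \<epsilon> s j else int j)"
  using bm_len[of \<epsilon> s j] bm_prefix[of j j \<epsilon> s]
  by (auto simp: Dlt_Suc jprime_def ee_def Let_def nth_append split: prod.splits)

lemma mu_Suc: "mu \<epsilon> s (Suc j) = (if Dlt \<epsilon> s (Suc j) = 0 then mu \<epsilon> s j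
   else smult (Dlt \<epsilon> s (nat (jprime \<epsilon> s j + 1))) (monom 1 (nat (max (ee \<epsilon> s j) 0)) * mu \<epsilon> s j)
      - smult (Dlt \<epsilon> s (Suc j)) (monom 1 (nat (max (- ee \<epsilon> s j) 0)) *
          (if jprime \<epsilon> s j = -1 then [:\<epsilon>:] else mu \<epsilon> s (nat (jprime \<epsilon> s j)))))"
proof -
  have b: "-1 \<le> jprime \<epsilon> s j" "jprime \<epsilon> s j < int j" using jp_bounds[of \<epsilon> s j] by auto
  have p1: "snd (snd (bm \<epsilon> s j)) ! nat (jprime \<epsilon> s j + 1) = Dlt \<epsilon> s (nat (jprime \<epsilon> s j + 1))"
    using b bm_prefix[of "nat (jprime \<epsilon> s j + 1)" j \<epsilon> s] by auto
  have p2: "jprime \<epsilon> s j \<noteq> -1 \<Longrightarrow> fst (bm \<epsilon> s j) ! nat (jprime \<epsilon> s j) = mu \<epsilon> s (nat (jprime \<epsilon> s j))"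
    using b bm_prefix[of "nat (jprime \<epsilon> s j)" j \<epsilon> s] by auto
  show ?thesis
    using bm_len[of \<epsilon> s j] bm_prefix[of j j \<epsilon> s] p1 p2
    by (auto simp: Dlt_Suc mu_def ee_def Let_def nth_append split: prod.splits)
qed


definition A :: "'a::comm_ring_1 poly \<Rightarrow> (nat \<Rightarrow> 'a) \<Rightarrow> nat \<Rightarrow> nat \<Rightarrow> 'a" where
  "A f s d k = (\<Sum>t\<le>d. coeff f t * s (k + t - d))"

lemma lcoeff_A:
  assumes "degree f + 1 \<le> k" "k \<le> n"
  shows "lcoeff f s n (int (degree f) - int k) = A f s (degree f) k"
proof -
  let ?d = "degree f"
  let ?g = "\<lambda>i. (if 0 \<le> (int ?d - int k) + int i then coeff f (nat ((int ?d - int k) + int i)) else 0) * s i"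
  have "lcoeff f s n (int ?d - int k) = sum ?g {1..n}" by (simp add: lcoeff_def)
  also have "\<dots> = sum ?g {k - ?d..k}"
  proof (rule sum.mono_neutral_right)
    show "finite {1..n}" by simp
    show "{k - ?d..k} \<subseteq> {1..n}" using assms by auto
    show "\<forall>i\<in>{1..n} - {k - ?d..k}. ?g i = 0"
    proof
      fix i assume i: "i \<in> {1..n} - {k - ?d..k}"
      show "?g i = 0"
      proof (cases "i < k - ?d")
        case True then show ?thesis using assms by auto
      next
        case False
        then have "i > k" using i by auto
        then have "nat ((int ?d - int k) + int i) > ?d" by auto
        then show ?thesis by (simp add: coeff_eq_0)
      qed
    qed
  qed
  also have "\<dots> = sum ?g {0 + (k - ?d)..?d + (k - ?d)}" using assms by simp
  also have "\<dots> = sum (\<lambda>t. ?g (t + (k - ?d))) {0..?d}" by (rule sum.shift_bounds_cl_nat_ivl)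
  also have "\<dots> = A f s ?d k"
    unfolding A_def atMost_atLeast0[symmetric]
    by (rule sum.cong) (use assms in \<open>auto simp: add.commute\<close>)
  finally show ?thesis .
qed

lemma A_diff: "A (f - g) s d k = A f s d k - A g s d k"
  by (simp add: A_def algebra_simps sum_subtractf)

lemma A_smult: "A (smult c f) s d k = c * A f s d k"
  by (simp add: A_def sum_distrib_left algebra_simps)

lemma A_shift: "A (monom 1 a * f) s (a + d) k = A f s d k"
proof -
  let ?h = "\<lambda>t. (if t < a then 0 else coeff f (t - a)) * s (k + t - (a + d))"
  have "A (monom 1 a * f) s (a + d) k = sum ?h {..a+d}"
    unfolding A_def by (rule sum.cong) (auto simp: coeff_monom_mult)
  also have "\<dots> = sum ?h {a..a+d}"
    by (rule sum.mono_neutral_right) auto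
  also have "\<dots> = sum ?h {0+a..d+a}" by (simp add: add.commute)
  also have "\<dots> = sum (\<lambda>u. ?h (u + a)) {0..d}" by (rule sum.shift_bounds_cl_nat_ivl)
  also have "\<dots> = A f s d k" unfolding A_def atMost_atLeast0[symmetric]
    by (rule sum.cong) auto
  finally show ?thesis .
qed

lemma A_lift:
  assumes "degree g \<le> d'" "d' \<le> D" "D + 1 \<le> k"
  shows "A g s D k = A g s d' (k - (D - d'))"
proof -
  have "A g s D k = (\<Sum>t\<le>d'. coeff g t * s (k + t - D))"
    unfolding A_def by (rule sum.mono_neutral_right) (use assms in \<open>auto simp: coeff_eq_0\<close>)
  also have "\<dots> = A g s d' (k - (D - d'))" unfolding A_def
    by (rule sum.cong) (use assms in auto)
  finally show ?thesis .
qed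

lemma is_ann_A: "is_ann f s n \<longleftrightarrow> f = 0 \<or> (\<forall>k. degree f + 1 \<le> k \<and> k \<le> n \<longrightarrow> A f s (degree f) k = 0)"
  unfolding is_ann_def using lcoeff_A[of f _ n s] by (metis of_nat_add of_nat_1)

lemma Delta_A: "degree f + 1 \<le> m \<Longrightarrow> Delta f s m = A f s (degree f) m"
  unfolding Delta_def by (rule lcoeff_A) auto

lemma L_le: "f \<noteq> 0 \<Longrightarrow> is_ann f s n \<Longrightarrow> L s n \<le> degree f"
  unfolding L_def by (rule Least_le) auto

lemma L_eq: "f \<noteq> 0 \<Longrightarrow> is_ann f s n \<Longrightarrow> (\<forall>g. g \<noteq> 0 \<and> is_ann g s n \<longrightarrow> degree f \<le> degree g) \<Longrightarrow> L s n = degree f"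
  unfolding L_def by (rule Least_equality) auto

lemma lower:
  fixes f g :: "'a::idom poly"
  assumes "d + 1 \<le> j" "\<forall>k. d + 1 \<le> k \<and> k < j \<longrightarrow> A f s d k = 0" "A f s d j \<noteq> 0" "g \<noteq> 0"
    "\<forall>k. degree g + 1 \<le> k \<and> k \<le> j \<longrightarrow> A g s (degree g) k = 0"
  shows "j \<le> d + degree g"
proof (rule ccontr)
  assume c: "\<not> j \<le> d + degree g"
  define e where "e = degree g"
  define S where "S = (\<Sum>a\<le>d. \<Sum>b\<le>e. coeff f a * coeff g b * s (j + a + b - d - e))"
  have "S = (\<Sum>a\<le>d. coeff f a * A g s e (j + a - d))"
    unfolding S_def A_def sum_distrib_left
    by (intro sum.cong refl) (use c in \<open>auto simp: e_def algebra_simps\<close>)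
  also have "\<dots> = 0"
  proof (intro sum.neutral ballI)
    fix a assume "a \<in> {..d}"
    then have "degree g + 1 \<le> j + a - d \<and> j + a - d \<le> j" using c by auto
    then show "coeff f a * A g s e (j + a - d) = 0" using assms(5) by (simp add: e_def)
  qed
  finally have S0: "S = 0" .
  have "S = (\<Sum>b\<le>e. coeff g b * A f s d (j + b - e))"
    unfolding S_def A_def sum_distrib_left
    by (subst sum.swap) (intro sum.cong refl, use c in \<open>auto simp: e_def algebra_simps\<close>)
  also have "\<dots> = (\<Sum>b<e. coeff g b * A f s d (j + b - e)) + coeff g e * A f s d j"
    by (simp flip: lessThan_Suc_atMost)
  also have "(\<Sum>b<e. coeff g b * A f s d (j + b - e)) = 0"
  proof (intro sum.neutral ballI)
    fix b assume "b \<in> {..<e}"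
    then have "d + 1 \<le> j + b - e \<and> j + b - e < j" using c by (auto simp: e_def)
    then show "coeff g b * A f s d (j + b - e) = 0" using assms(2) by simp
  qed
  finally have "S = coeff g e * A f s d j" by simp
  moreover have "coeff g e \<noteq> 0" using assms(4) by (simp add: e_def)
  ultimately show False using S0 assms(3) by simp
qed


lemma degree_diff_eq_left': "degree (q::'a::comm_ring_1 poly) < degree p \<Longrightarrow> degree (p - q) = degree p"
  using degree_add_eq_left[of "-q" p] by simp

lemma degree_monom_mult: "(p::'a::idom poly) \<noteq> 0 \<Longrightarrow> degree (monom 1 a * p) = a + degree p"
  by (simp add: degree_mult_eq degree_monom_eq)

lemma is_ann_mono: "is_ann g s (Suc j) \<Longrightarrow> is_ann g s j"
  unfolding is_ann_A by auto

definition Inv :: "'a::idom \<Rightarrow> (nat \<Rightarrow> 'a) \<Rightarrow> nat \<Rightarrow> bool" where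
 "Inv \<epsilon> s j \<longleftrightarrow> mu \<epsilon> s j \<noteq> 0 \<and> degree (mu \<epsilon> s j) \<le> j \<and> is_ann (mu \<epsilon> s j) s j
   \<and> (\<forall>g. g \<noteq> 0 \<and> is_ann g s j \<longrightarrow> degree (mu \<epsilon> s j) \<le> degree g)
   \<and> (jprime \<epsilon> s j = -1 \<longrightarrow> degree (mu \<epsilon> s j) = 0)
   \<and> (0 \<le> jprime \<epsilon> s j \<longrightarrow> Dlt \<epsilon> s (nat (jprime \<epsilon> s j + 1)) \<noteq> 0
        \<and> int (degree (mu \<epsilon> s j)) = jprime \<epsilon> s j + 1 - int (degree (mu \<epsilon> s (nat (jprime \<epsilon> s j)))))"

lemma Inv_all: "Inv \<epsilon> s j"
proof (induction j rule: less_induct)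
  case (less j0)
  show ?case
  proof (cases j0)
    case 0 then show ?thesis by (simp add: Inv_def mu0 jp0 is_ann_def)
  next
    case (Suc j)
    have IH: "Inv \<epsilon> s j" using less Suc by simp
    define \<mu> where "\<mu> = mu \<epsilon> s j"
    define L where "L = degree \<mu>"
    define \<Delta> where "\<Delta> = Dlt \<epsilon> s (Suc j)"
    define e where "e = ee \<epsilon> s j"
    define m where "m = jprime \<epsilon> s j"
    have e_def': "e = int j + 1 - 2 * int L" by (simp add: e_def ee_def L_def \<mu>_def)
    have mu0: "\<mu> \<noteq> 0" and Lj: "L \<le> j" and annj: "is_ann \<mu> s j"
      and minj: "\<forall>g. g \<noteq> 0 \<and> is_ann g s j \<longrightarrow> L \<le> degree g"
      and mneg: "m = -1 \<longrightarrow> L = 0"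
      and mpos: "0 \<le> m \<longrightarrow> Dlt \<epsilon> s (nat (m + 1)) \<noteq> 0 \<and> int L = m + 1 - int (degree (mu \<epsilon> s (nat m)))"
      using IH by (simp_all add: Inv_def \<mu>_def L_def m_def)
    have mb: "-1 \<le> m" "m < int j" using jp_bounds[of \<epsilon> s j] by (auto simp: m_def)
    have nj: "nat (int j + 1) = Suc j" by simp
    have annA: "\<forall>k. L + 1 \<le> k \<and> k \<le> j \<longrightarrow> A \<mu> s L k = 0" using annj mu0 by (simp add: is_ann_A L_def)
    have DA: "\<Delta> = A \<mu> s L (Suc j)" using Lj by (simp add: \<Delta>_def Dlt_Suc Delta_A L_def \<mu>_def)
    show ?thesis
    proof (cases "\<Delta> = 0")
      case True
      have mu': "mu \<epsilon> s (Suc j) = \<mu>" and jp': "jprime \<epsilon> s (Suc j) = m"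
        using True by (simp_all add: mu_Suc jp_Suc \<Delta>_def \<mu>_def m_def)
      have ann': "is_ann \<mu> s (Suc j)"
        unfolding is_ann_A using annA DA True by (auto simp: L_def le_Suc_eq)
      show ?thesis unfolding Suc Inv_def mu' jp'
        using mu0 Lj ann' minj mneg mpos is_ann_mono by (auto simp: L_def m_def \<mu>_def)
    next
      case False
      note Dn0 = False
      show ?thesis
      proof (cases "m = -1")
        case True
        have L0: "L = 0" using True mneg by simp
        have epos: "e > 0" using e_def' L0 by simp
        define p where "p = monom 1 (Suc j) * \<mu>"
        have na: "nat (max (ee \<epsilon> s j) 0) = Suc j" "nat (max (- ee \<epsilon> s j) 0) = 0"
          using e_def' L0 by (simp_all add: e_def)
        have mu': "mu \<epsilon> s (Suc j) = p - smult \<Delta> (monom 1 0 * [:\<epsilon>:])"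
          using Dn0 True epos na by (simp add: mu_Suc \<Delta>_def \<mu>_def m_def e_def Dlt0 p_def nat_int_add)
        have jp': "jprime \<epsilon> s (Suc j) = int j"
          using Dn0 epos by (simp add: jp_Suc \<Delta>_def e_def)
        have dp: "degree p = Suc j" using mu0 L0 by (simp add: p_def degree_monom_mult L_def)
        have dq: "degree (smult \<Delta> (monom 1 0 * [:\<epsilon>:])) = 0" by (simp add: monom_0)
        have dnew: "degree (mu \<epsilon> s (Suc j)) = Suc j" unfolding mu' by (subst degree_diff_eq_left') (use dp dq in simp_all)
        have nz: "mu \<epsilon> s (Suc j) \<noteq> 0" using dnew by auto
        have ann': "is_ann (mu \<epsilon> s (Suc j)) s (Suc j)" unfolding is_ann_A using dnew by auto
        have mn: "\<forall>g. g \<noteq> 0 \<and> is_ann g s (Suc j) \<longrightarrow> Suc j \<le> degree g"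
        proof (intro allI impI)
          fix g :: "'a poly" assume g: "g \<noteq> 0 \<and> is_ann g s (Suc j)"
          have "Suc j \<le> L + degree g"
            by (rule lower[of L "Suc j" \<mu> s g]) (use Lj annA Dn0 DA g in \<open>auto simp: is_ann_A\<close>)
          then show "Suc j \<le> degree g" using L0 by simp
        qed
        show ?thesis unfolding Suc Inv_def jp'
          using nz dnew ann' mn Dn0 L0 nj by (simp add: \<Delta>_def L_def \<mu>_def)
      next
        case False
        define m' where "m' = nat m"
        have mm: "m = int m'" "m' < j" using False mb by (auto simp: m'_def)
        have nm: "nat (int m' + 1) = Suc m'" "nat (m + 1) = Suc m'" using mm by simp_all
        have IHm: "Inv \<epsilon> s m'" using less Suc mm by simp
        define \<mu>' where "\<mu>' = mu \<epsilon> s m'"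
        define L' where "L' = degree \<mu>'"
        define \<Delta>' where "\<Delta>' = Dlt \<epsilon> s (Suc m')"
        have mu0': "\<mu>' \<noteq> 0" and Lm: "L' \<le> m'" and annm: "is_ann \<mu>' s m'"
          using IHm by (simp_all add: Inv_def \<mu>'_def L'_def)
        have annA': "\<forall>k. L' + 1 \<le> k \<and> k \<le> m' \<longrightarrow> A \<mu>' s L' k = 0"
          using annm mu0' by (simp add: is_ann_A L'_def)
        have DA': "\<Delta>' = A \<mu>' s L' (Suc m')" using Lm by (simp add: \<Delta>'_def Dlt_Suc Delta_A L'_def \<mu>'_def)
        have Dp0: "\<Delta>' \<noteq> 0" and LL: "int L = int m' + 1 - int L'"
          using mpos mm nm by (simp_all add: \<Delta>'_def L'_def \<mu>'_def nat_int_add)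
        define a where "a = nat (max e 0)"
        define b where "b = nat (max (- e) 0)"
        define N where "N = a + L"
        define p where "p = smult \<Delta>' (monom 1 a * \<mu>)"
        define q where "q = smult \<Delta> (monom 1 b * \<mu>')"
        have mu': "mu \<epsilon> s (Suc j) = p - q"
          using Dn0 False mm nm by (simp add: mu_Suc \<Delta>_def \<mu>_def m_def e_def p_def q_def a_def b_def \<Delta>'_def \<mu>'_def nat_int_add)
        have dp: "degree p = N" using mu0 Dp0 by (simp add: p_def N_def degree_monom_mult L_def)
        have dq: "degree q = b + L'" using mu0' Dn0 by (simp add: q_def degree_monom_mult L'_def)
        have ar1: "b + L' < N" using LL mm e_def' unfolding a_def b_def N_def by linarith
        have ar2: "N - (b + L') = j - m'" using LL mm e_def' unfolding a_def b_def N_def by linarith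
        have dnew: "degree (mu \<epsilon> s (Suc j)) = N" unfolding mu' by (subst degree_diff_eq_left') (use dp dq ar1 in simp_all)
        have nz: "mu \<epsilon> s (Suc j) \<noteq> 0" using mu' dp dq ar1 by auto
        have Ak: "A (mu \<epsilon> s (Suc j)) s N k = \<Delta>' * A \<mu> s L k - \<Delta> * A \<mu>' s L' (k - (j - m'))"
          if "N + 1 \<le> k" for k
        proof -
          have "A q s N k = \<Delta> * A (monom 1 b * \<mu>') s (b + L') (k - (N - (b + L')))"
            unfolding q_def A_smult
            by (subst A_lift[of _ "b + L'"]) (use that ar1 mu0' in \<open>auto simp: degree_monom_mult L'_def\<close>)
          then have "A q s N k = \<Delta> * A \<mu>' s L' (k - (j - m'))" using ar2 by (simp add: A_shift)
          moreover have "A p s N k = \<Delta>' * A \<mu> s L k" by (simp add: p_def A_smult N_def A_shift)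
          ultimately show ?thesis by (simp add: mu' A_diff)
        qed
        have ann': "is_ann (mu \<epsilon> s (Suc j)) s (Suc j)"
          unfolding is_ann_A dnew
        proof (intro disjI2 allI impI)
          fix k assume k: "N + 1 \<le> k \<and> k \<le> Suc j"
          show "A (mu \<epsilon> s (Suc j)) s N k = 0"
          proof (cases "k = Suc j")
            case True
            have "Suc j - (j - m') = Suc m'" using mm by simp
            then show ?thesis using Ak[of k] k True DA DA' by (simp add: mult.commute)
          next
            case False
            have "A \<mu> s L k = 0" using annA k False by (auto simp: N_def)
            moreover have "A \<mu>' s L' (k - (j - m')) = 0"
            proof -
              have "L' + 1 \<le> k - (j - m') \<and> k - (j - m') \<le> m'" using k False ar1 ar2 mm by linarith
              then show ?thesis using annA' by blast
            qed
            ultimately show ?thesis using Ak[of k] k by simp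
          qed
        qed
        have mn: "\<forall>g. g \<noteq> 0 \<and> is_ann g s (Suc j) \<longrightarrow> N \<le> degree g"
        proof (intro allI impI)
          fix g :: "'a poly" assume g: "g \<noteq> 0 \<and> is_ann g s (Suc j)"
          have "Suc j \<le> L + degree g"
            by (rule lower[of L "Suc j" \<mu> s g]) (use Lj annA Dn0 DA g in \<open>auto simp: is_ann_A\<close>)
          moreover have "L \<le> degree g" using minj g is_ann_mono by blast
          ultimately show "N \<le> degree g" using e_def' unfolding N_def a_def by linarith
        qed
        have Nle: "N \<le> Suc j" using e_def' Lj unfolding N_def a_def by linarith
        show ?thesis
        proof (cases "e \<le> 0")
          case True
          have jp': "jprime \<epsilon> s (Suc j) = m" using True by (simp add: jp_Suc e_def m_def)
          have "N = L" using True by (simp add: N_def a_def)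
          then show ?thesis unfolding Suc Inv_def jp'
            using nz dnew ann' mn Nle False mpos by (simp add: L_def \<mu>_def)
        next
          case epos: False
          have jp': "jprime \<epsilon> s (Suc j) = int j" using epos Dn0 by (simp add: jp_Suc e_def \<Delta>_def)
          have "int N = int j + 1 - int L" using epos e_def' by (simp add: N_def a_def)
          then show ?thesis unfolding Suc Inv_def jp'
            using nz dnew ann' mn Nle Dn0 nj by (simp add: L_def \<mu>_def \<Delta>_def nat_int_add)
        qed
      qed
    qed
  qed
qed


lemma L_mu: "degree (mu (\<epsilon>::'a::idom) s j) = L s j"
  using Inv_all[of \<epsilon> s j] by (intro L_eq[symmetric]) (auto simp: Inv_def)

theorem mainTheorem4:
  fixes \<epsilon> :: "'a::idom" and s :: "nat \<Rightarrow> 'a" and n :: nat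
  assumes "1 \<le> n"
  shows "mu \<epsilon> s n \<in> Min_set s n
    \<and> (\<forall>j\<le>n. degree (mu \<epsilon> s j) = L s j)
    \<and> (Dlt \<epsilon> s n = 0 \<longrightarrow>
         L s n = L s (n - 1) \<and> ee \<epsilon> s n = ee \<epsilon> s (n - 1) + 1)
    \<and> (Dlt \<epsilon> s n \<noteq> 0 \<longrightarrow>
         L s n = degree (mu \<epsilon> s n)
       \<and> int (L s n) = max (ee \<epsilon> s (n - 1)) 0 + int (L s (n - 1))
       \<and> int (L s n) = jprime \<epsilon> s n + 1 - int (L s (nat (jprime \<epsilon> s n)))
       \<and> ee \<epsilon> s n = - \<bar>ee \<epsilon> s (n - 1)\<bar> + 1)"
proof -
  obtain j where n: "n = Suc j" using assms by (cases n) auto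
  have I: "Inv \<epsilon> s n" by (rule Inv_all)
  have Ij: "Inv \<epsilon> s j" by (rule Inv_all)
  have P1: "mu \<epsilon> s n \<in> Min_set s n" using I by (auto simp: Inv_def Min_set_def)
  have P2: "\<forall>j\<le>n. degree (mu \<epsilon> s j) = L s j" using L_mu by blast
  have P3: "Dlt \<epsilon> s n = 0 \<longrightarrow> L s n = L s (n - 1) \<and> ee \<epsilon> s n = ee \<epsilon> s (n - 1) + 1"
  proof
    assume D: "Dlt \<epsilon> s n = 0"
    then have m: "mu \<epsilon> s n = mu \<epsilon> s j" by (simp add: n mu_Suc)
    have "L s n = L s j" using L_mu[of \<epsilon> s n] L_mu[of \<epsilon> s j] m by simp
    then show "L s n = L s (n - 1) \<and> ee \<epsilon> s n = ee \<epsilon> s (n - 1) + 1"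
      using m by (simp add: n ee_def)
  qed
  have P4: "Dlt \<epsilon> s n \<noteq> 0 \<longrightarrow> L s n = degree (mu \<epsilon> s n)
       \<and> int (L s n) = max (ee \<epsilon> s (n - 1)) 0 + int (L s (n - 1))
       \<and> int (L s n) = jprime \<epsilon> s n + 1 - int (L s (nat (jprime \<epsilon> s n)))
       \<and> ee \<epsilon> s n = - \<bar>ee \<epsilon> s (n - 1)\<bar> + 1"
  proof
    assume D: "Dlt \<epsilon> s n \<noteq> 0"
    define e where "e = ee \<epsilon> s j"
    have e': "e = int j + 1 - 2 * int (degree (mu \<epsilon> s j))" by (simp add: e_def ee_def)
    have key: "int (degree (mu \<epsilon> s n)) = max e 0 + int (degree (mu \<epsilon> s j)) \<and> 0 \<le> jprime \<epsilon> s n"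
    proof (cases "e \<le> 0")
      case True
      have jp: "jprime \<epsilon> s n = jprime \<epsilon> s j" using True by (simp add: n jp_Suc e_def)
      have "jprime \<epsilon> s j \<noteq> -1"
      proof
        assume "jprime \<epsilon> s j = -1"
        then have "degree (mu \<epsilon> s j) = 0" using Ij by (simp add: Inv_def)
        then show False using True e' by simp
      qed
      then have "0 \<le> jprime \<epsilon> s j" using jp_bounds[of \<epsilon> s j] by linarith
      then show ?thesis using I Ij jp True by (simp add: Inv_def)
    next
      case False
      have jp: "jprime \<epsilon> s n = int j" using False D by (simp add: n jp_Suc e_def)
      then show ?thesis using I False e' by (simp add: Inv_def n)
    qed
    have en: "ee \<epsilon> s n = int n + 1 - 2 * int (degree (mu \<epsilon> s n))" by (simp add: ee_def)
    have "int (degree (mu \<epsilon> s n)) = jprime \<epsilon> s n + 1 - int (degree (mu \<epsilon> s (nat (jprime \<epsilon> s n))))"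
      using I key by (simp add: Inv_def)
    then show "L s n = degree (mu \<epsilon> s n)
       \<and> int (L s n) = max (ee \<epsilon> s (n - 1)) 0 + int (L s (n - 1))
       \<and> int (L s n) = jprime \<epsilon> s n + 1 - int (L s (nat (jprime \<epsilon> s n)))
       \<and> ee \<epsilon> s n = - \<bar>ee \<epsilon> s (n - 1)\<bar> + 1"
      using key en e' L_mu[of \<epsilon> s n] L_mu[of \<epsilon> s j] L_mu[of \<epsilon> s "nat (jprime \<epsilon> s n)"]
      by (simp add: n e_def abs_if max_def split: if_splits)
  qed
  show ?thesis using P1 P2 P3 P4 by blast
qed

end
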